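(* (a) For every integer $B\ge1$ there is a deterministic exploration algorithm which, knowing only $B$ (and not $n$ or $k$), solves PVG-Exploration of every feasible anonymous PV graph (homogeneous or heterogeneous, with arbitrary routes) whose period satisfies $p\le B$, and in which the agent performs at most $(3k-2)B^2$ moves, where $k$ is the number of carriers. (b) For every integer $B\ge1$ there is a deterministic exploration algorithm which, knowing only $B$ and that the system is homogeneous, solves PVG-Exploration of every feasible anonymous homogeneous PV graph with period $p\le B$, performing at most $(3k-2)B$ moves.
   Context: A PV (periodically varying) system consists of a finite set $S$ of $n$ sites and a set $C$ of $k\le n$ carriers. Each carrier $c$ has a distinct identifier and a route $\pi(c)=\langle x_0,\dots,x_{p(c)-1}\rangle$, a finite sequence of sites (repetitions allowed) of length $p(c)\ge 1$ called its period; $\pi(c)[j]=x_{j \bmod p(c)}$. At each time $t\in\mathbb{N}$ carrier $c$ is at site $\pi(c)[t]$ and moves to $\pi(c)[t+1]$. The PV graph $\vec G_R$ is the directed edge-labelled multigraph on $S$ with edges $(x_i,x_{i+1},i)$, $0\le i<p(c)$, for every carrier. Its period is $p=\max_{c}p(c)$; it is homogeneous if all periods are equal, heterogeneous otherwise. In an anonymous system sites are indistinguishable to the agent. An exploring agent is injected at time $0$ at a site of $\mathrm{start}(\vec G_R)=\{\pi(c)[0]:c\in C\}$. If at time $t$ the agent is at site $x$, it must either choose a carrier $c$ with $\pi(c)[t]=x$ and ride with it to $\pi(c)[t+1]$ (one move), or halt and exit; it cannot wait at a site. At each time the agent observes only the identifiers of the carriers present at its current site. An exploration algorithm is a deterministic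 rule mapping the agent's a priori knowledge and history of observations to its next action. An algorithm solves PVG-Exploration of $\vec G_R$ if from every injection site the agent visits every site of $S$ and halts after finitely many moves. $\vec G_R$ is feasible if from the starting point of every carrier there exists a walk realizable by the agent (riding carriers and switching between carriers at the same site at the same time) visiting all sites. *)

theory Defs
  imports Main
begin

definition pos :: "(nat \<Rightarrow> nat list) \<Rightarrow> nat \<Rightarrow> nat \<Rightarrow> nat" where
  "pos \<pi> c t = \<pi> c ! (t mod length (\<pi> c))"

definition pv_system :: "nat set \<Rightarrow> nat set \<Rightarrow> (nat \<Rightarrow> nat list) \<Rightarrow> bool" where
  "pv_system S C \<pi> \<longleftrightarrow> finite S \<and> finite C \<and> C \<noteq> {} \<and> card C \<le> card S \<and>
     (\<forall>c\<in>C. \<pi> c \<noteq> [] \<and> set (\<pi> c) \<subseteq> S)"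

definition period :: "nat set \<Rightarrow> (nat \<Rightarrow> nat list) \<Rightarrow> nat" where
  "period C \<pi> = Max ((\<lambda>c. length (\<pi> c)) ` C)"

definition homogeneous :: "nat set \<Rightarrow> (nat \<Rightarrow> nat list) \<Rightarrow> bool" where
  "homogeneous C \<pi> \<longleftrightarrow> (\<forall>c\<in>C. \<forall>d\<in>C. length (\<pi> c) = length (\<pi> d))"

definition start :: "nat set \<Rightarrow> (nat \<Rightarrow> nat list) \<Rightarrow> nat set" where
  "start C \<pi> = (\<lambda>c. pos \<pi> c 0) ` C"

definition realizable_walk :: "nat set \<Rightarrow> (nat \<Rightarrow> nat list) \<Rightarrow> (nat \<Rightarrow> nat) \<Rightarrow> nat \<Rightarrow> bool" where
  "realizable_walk C \<pi> w m \<longleftrightarrow>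
     (\<forall>t<m. \<exists>c\<in>C. pos \<pi> c t = w t \<and> pos \<pi> c (Suc t) = w (Suc t))"

definition feasible :: "nat set \<Rightarrow> nat set \<Rightarrow> (nat \<Rightarrow> nat list) \<Rightarrow> bool" where
  "feasible S C \<pi> \<longleftrightarrow> (\<forall>x\<in>start C \<pi>. \<exists>w m. w 0 = x \<and> realizable_walk C \<pi> w m \<and> S \<subseteq> w ` {..m})"

definition obs :: "nat set \<Rightarrow> (nat \<Rightarrow> nat list) \<Rightarrow> nat \<Rightarrow> nat \<Rightarrow> nat set" where
  "obs C \<pi> x t = {c\<in>C. pos \<pi> c t = x}"

datatype act = Halt | Ride nat

text \<open>An exploration algorithm maps the history of observations (times 0..t) to an action.
The agent's a priori knowledge (B, homogeneity) is encoded by the algorithm being chosen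
depending only on it.\<close>
type_synonym algorithm = "nat set list \<Rightarrow> act"

fun run :: "algorithm \<Rightarrow> nat set \<Rightarrow> (nat \<Rightarrow> nat list) \<Rightarrow> nat \<Rightarrow> nat \<Rightarrow> nat \<times> nat set list" where
  "run alg C \<pi> x0 0 = (x0, [obs C \<pi> x0 0])"
| "run alg C \<pi> x0 (Suc t) =
     (let (x, h) = run alg C \<pi> x0 t in
      case alg h of
        Halt \<Rightarrow> (x, h)
      | Ride c \<Rightarrow> (let y = pos \<pi> c (Suc t) in (y, h @ [obs C \<pi> y (Suc t)])))"

definition explores_in :: "algorithm \<Rightarrow> nat set \<Rightarrow> nat set \<Rightarrow> (nat \<Rightarrow> nat list) \<Rightarrow> nat \<Rightarrow> nat \<Rightarrow> bool" where
  "explores_in alg S C \<pi> x0 m \<longleftrightarrow>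
     (\<forall>t<m. \<exists>c. alg (snd (run alg C \<pi> x0 t)) = Ride c \<and>
                 c \<in> obs C \<pi> (fst (run alg C \<pi> x0 t)) t) \<and>
     alg (snd (run alg C \<pi> x0 m)) = Halt \<and>
     S \<subseteq> (\<lambda>t. fst (run alg C \<pi> x0 t)) ` {..m}"

definition solves_within :: "algorithm \<Rightarrow> nat set \<Rightarrow> nat set \<Rightarrow> (nat \<Rightarrow> nat list) \<Rightarrow> nat \<Rightarrow> bool" where
  "solves_within alg S C \<pi> bound \<longleftrightarrow>
     (\<forall>x0\<in>start C \<pi>. \<exists>m\<le>bound. explores_in alg S C \<pi> x0 m)"

end

theory Submission
  imports Defs
begin


datatype mode = Explore | Down nat | Up | Done
type_synonym st = "mode \<times> (nat \<times> nat set) list \<times> nat set"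

definition decide :: "(nat \<times> nat set) list \<Rightarrow> nat set \<Rightarrow> st" where
 "decide stk E = (if snd (hd stk) - E \<noteq> {} then (Down (LEAST d. d \<in> snd (hd stk) - E), stk, E)
    else if 2 \<le> length stk then (Up, stk, E) else (Done, stk, E))"

fun nxt :: "nat \<Rightarrow> (nat \<Rightarrow> nat set) \<Rightarrow> nat \<Rightarrow> st \<Rightarrow> st" where
 "nxt W f j (Explore, stk, E) = decide ((fst (hd stk), (\<Union>i<W. f (j*W+i))) # tl stk) (insert (fst (hd stk)) E)"
| "nxt W f j (Down d, stk, E) = (Explore, (d,{}) # stk, E)"
| "nxt W f j (Up, stk, E) = decide (tl stk) E"
| "nxt W f j (Done, stk, E) = (Done, stk, E)"

fun ph :: "nat \<Rightarrow> (nat \<Rightarrow> nat set) \<Rightarrow> nat \<Rightarrow> st" where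
 "ph W f 0 = (Explore, [(LEAST c. c \<in> f 0, {})], {})"
| "ph W f (Suc j) = nxt W f j (ph W f j)"

definition cur :: "st \<Rightarrow> nat" where "cur s = fst (hd (fst (snd s)))"
definition tgt :: "st \<Rightarrow> nat" where
 "tgt s = (case fst s of Down d \<Rightarrow> d | Up \<Rightarrow> fst (hd (tl (fst (snd s)))) | _ \<Rightarrow> cur s)"

definition algo :: "nat \<Rightarrow> algorithm" where
 "algo W h = (let t = length h - 1; s = ph W (\<lambda>i. h ! i) (t div W) in
    if fst s = Done then Halt else Ride (if tgt s \<in> h ! t then tgt s else cur s))"

lemma nxt_cong: assumes "\<forall>i<Suc j*W. f i = g i" shows "nxt W f j s = nxt W g j s"
proof -
  obtain mo stk E where s: "s = (mo,stk,E)" by (cases s) auto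
  have "(\<Union>i<W. f (j*W+i)) = (\<Union>i<W. g (j*W+i))" using assms by auto
  then show ?thesis unfolding s by (cases mo) auto
qed

lemma ph_cong: "(\<forall>i\<le>j*W. f i = g i) \<Longrightarrow> ph W f j = ph W g j"
proof (induction j)
  case 0 then show ?case by simp
next
  case (Suc j)
  have "\<forall>i\<le>j*W. f i = g i"
  proof (intro allI impI)
    fix i assume "i \<le> j*W"
    then have "i \<le> Suc j * W" by (simp add: trans_le_add2)
    then show "f i = g i" using Suc.prems by blast
  qed
  then have "ph W f j = ph W g j" using Suc.IH by blast
  moreover have "nxt W f j s = nxt W g j s" for s using Suc.prems by (intro nxt_cong) auto
  ultimately show ?case by simp
qed

lemma win: assumes q: "(q::nat) > 0" shows "\<exists>t. t0 \<le> t \<and> t < t0 + q \<and> t mod q = r mod q"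
proof -
  define a where "a = t0 mod q"
  define b where "b = r mod q"
  define k where "k = t0 div q"
  have t0: "t0 = k*q + a" unfolding a_def k_def by simp
  have aq: "a < q" "b < q" using q unfolding a_def b_def by auto
  have bm: "r mod q = b" by (simp add: b_def)
  have m1: "(b + k*q) mod q = b" using aq(2) by (simp only: mod_mult_self1 mod_less)
  have m2: "(b + (k+1)*q) mod q = b" using aq(2) by (simp only: mod_mult_self1 mod_less)
  have e: "(k+1)*q = k*q + q" by simp
  show ?thesis
  proof (cases "a \<le> b")
    case True
    have "t0 \<le> b + k*q" "b + k*q < t0 + q" using True aq t0 by linarith+
    then show ?thesis using m1 bm by blast
  next
    case False
    have "t0 \<le> b + (k+1)*q" "b + (k+1)*q < t0 + q" using False aq t0 e by linarith+
    then show ?thesis using m2 bm by blast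
  qed
qed



locale expl =
  fixes W :: nat and S C :: "nat set" and \<pi> :: "nat \<Rightarrow> nat list" and x0 :: nat
  assumes W1: "1 \<le> W" and sys: "pv_system S C \<pi>" and fea: "feasible S C \<pi>"
    and per: "\<forall>c\<in>C. \<forall>d\<in>C. \<exists>q>0. q \<le> W \<and> length (\<pi> c) dvd q \<and> length (\<pi> d) dvd q"
    and x0: "x0 \<in> start C \<pi>"
begin

definition X where "X t = fst (run (algo W) C \<pi> x0 t)"
definition H where "H t = snd (run (algo W) C \<pi> x0 t)"
definition Ob where "Ob t = obs C \<pi> (X t) t"
definition Sg where "Sg j = ph W Ob j"
definition M where "M c = {d\<in>C. \<exists>t. pos \<pi> c t = pos \<pi> d t}"
definition c0 where "c0 = (LEAST c. c \<in> Ob 0)"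

lemma finC: "finite C" using sys by (simp add: pv_system_def)

lemma ne: "c \<in> C \<Longrightarrow> \<pi> c \<noteq> []" using sys by (simp add: pv_system_def)

lemma pos_in: "c \<in> C \<Longrightarrow> pos \<pi> c t \<in> set (\<pi> c)"
  using ne[of c] by (simp add: pos_def)

lemma in_O: "c \<in> Ob t \<longleftrightarrow> c \<in> C \<and> pos \<pi> c t = X t"
  by (simp add: Ob_def obs_def)

lemma X0: "X 0 = x0" by (simp add: X_def)

lemma H0: "H 0 = [Ob 0]" by (simp add: H_def Ob_def X0)

lemma run_Suc: assumes "algo W (H t) = Ride c"
  shows "X (Suc t) = pos \<pi> c (Suc t) \<and> H (Suc t) = H t @ [Ob (Suc t)]"
proof -
  have r: "run (algo W) C \<pi> x0 t = (X t, H t)" unfolding X_def H_def by (rule prod.collapse[symmetric])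
  have "run (algo W) C \<pi> x0 (Suc t) = (pos \<pi> c (Suc t), H t @ [obs C \<pi> (pos \<pi> c (Suc t)) (Suc t)])"
    using r assms by (simp add: Let_def)
  then show ?thesis unfolding Ob_def X_def[of "Suc t"] H_def[of "Suc t"] by simp
qed

lemma H_eq: "(\<forall>t'<t. algo W (H t') \<noteq> Halt) \<Longrightarrow> H t = map Ob [0..<Suc t]"
proof (induction t)
  case 0 then show ?case by (simp add: H0)
next
  case (Suc t)
  obtain c where c: "algo W (H t) = Ride c" using Suc.prems by (cases "algo W (H t)") auto
  have "H t = map Ob [0..<Suc t]" using Suc by auto
  then show ?case using run_Suc[OF c] by simp
qed

lemma alg_H: assumes "\<forall>t'<t. algo W (H t') \<noteq> Halt"
  shows "algo W (H t) = (if fst (Sg (t div W)) = Done then Halt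
           else Ride (if tgt (Sg (t div W)) \<in> Ob t then tgt (Sg (t div W)) else cur (Sg (t div W))))"
proof -
  have h: "H t = map Ob [0..<Suc t]" using H_eq assms by auto
  have l: "length (H t) - 1 = t" using h by simp
  have "\<forall>i\<le>(t div W)*W. (\<lambda>i. H t ! i) i = Ob i"
  proof (intro allI impI)
    fix i assume "i \<le> (t div W)*W"
    then have "i < Suc t" by (meson div_times_less_eq_dividend le_imp_less_Suc le_trans)
    then have "map Ob [0..<Suc t] ! i = Ob i" by (metis nth_map_upt diff_zero add_0)
    then show "(\<lambda>i. H t ! i) i = Ob i" using h by (simp only:)
  qed
  then have p: "ph W (\<lambda>i. H t ! i) (t div W) = Sg (t div W)" unfolding Sg_def by (rule ph_cong)
  have "map Ob [0..<Suc t] ! t = Ob t" by (metis nth_map_upt diff_zero add_0 lessI)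
  then have hh: "H t ! t = Ob t" using h by (simp only:)
  show ?thesis unfolding algo_def Let_def l p hh by (rule refl)
qed

lemma nohalt: "(\<forall>j'<J. fst (Sg j') \<noteq> Done) \<Longrightarrow> t < J*W \<Longrightarrow> algo W (H t) \<noteq> Halt"
proof (induction t rule: less_induct)
  case (less t)
  then have a: "\<forall>t'<t. algo W (H t') \<noteq> Halt" by auto
  have "t div W < J" using less.prems(2) by (simp add: less_mult_imp_div_less)
  then show ?case using alg_H[OF a] less.prems(1) by simp
qed

lemma divj: "i < W \<Longrightarrow> (j*W+i) div W = j" using W1 by simp

lemma phase:
  assumes nd: "\<forall>j'\<le>j. fst (Sg j') \<noteq> Done" and cC: "cur (Sg j) \<in> C" "tgt (Sg j) \<in> C"
    and X: "X (j*W) = pos \<pi> (cur (Sg j)) (j*W)"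
  shows "i \<le> W \<Longrightarrow> X (j*W+i) = pos \<pi> (tgt (Sg j)) (j*W+i) \<or>
     (X (j*W+i) = pos \<pi> (cur (Sg j)) (j*W+i) \<and> (\<forall>i'<i. pos \<pi> (cur (Sg j)) (j*W+i') \<noteq> pos \<pi> (tgt (Sg j)) (j*W+i')))"
proof (induction i)
  case 0 then show ?case using X by simp
next
  case (Suc i)
  define c where "c = cur (Sg j)"
  define d where "d = tgt (Sg j)"
  define t where "t = j*W+i"
  have iW: "i < W" using Suc by simp
  have nh: "\<forall>t'<t. algo W (H t') \<noteq> Halt"
    using nohalt[of "Suc j"] nd iW unfolding t_def by (auto simp: less_Suc_eq_le)
  have a: "algo W (H t) = Ride (if d \<in> Ob t then d else c)"
    using alg_H[OF nh] divj[OF iW] nd unfolding t_def c_def d_def by simp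
  have IH: "X t = pos \<pi> d t \<or> (X t = pos \<pi> c t \<and> (\<forall>i'<i. pos \<pi> c (j*W+i') \<noteq> pos \<pi> d (j*W+i')))"
    using Suc iW unfolding t_def c_def d_def by simp
  show ?case
  proof (cases "d \<in> Ob t")
    case True
    then show ?thesis using run_Suc[OF a] unfolding t_def c_def d_def by simp
  next
    case False
    then have "pos \<pi> d t \<noteq> X t" using cC in_O unfolding d_def by auto
    then have "X t = pos \<pi> c t \<and> (\<forall>i'<Suc i. pos \<pi> c (j*W+i') \<noteq> pos \<pi> d (j*W+i'))"
      using IH unfolding t_def by (auto simp: less_Suc_eq)
    then show ?thesis using run_Suc[of t c] a False unfolding t_def c_def d_def by simp
  qed
qed

lemma legal:
  assumes nd: "\<forall>j'\<le>j. fst (Sg j') \<noteq> Done" and cC: "cur (Sg j) \<in> C" "tgt (Sg j) \<in> C"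
    and X: "X (j*W) = pos \<pi> (cur (Sg j)) (j*W)" and iW: "i < W"
  shows "\<exists>c. algo W (H (j*W+i)) = Ride c \<and> c \<in> Ob (j*W+i)"
proof -
  define c where "c = cur (Sg j)"
  define d where "d = tgt (Sg j)"
  define t where "t = j*W+i"
  have nh: "\<forall>t'<t. algo W (H t') \<noteq> Halt"
    using nohalt[of "Suc j"] nd iW unfolding t_def by (auto simp: less_Suc_eq_le)
  have a: "algo W (H t) = Ride (if d \<in> Ob t then d else c)"
    using alg_H[OF nh] divj[OF iW] nd unfolding t_def c_def d_def by simp
  have P: "X t = pos \<pi> d t \<or> X t = pos \<pi> c t"
    using phase[OF nd cC X, of i] iW unfolding t_def c_def d_def by auto
  show ?thesis
  proof (cases "d \<in> Ob t")
    case True then show ?thesis using a unfolding t_def by auto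
  next
    case False
    then have "X t = pos \<pi> c t" using P cC in_O unfolding d_def by auto
    then have "c \<in> Ob t" using cC in_O unfolding c_def by auto
    then show ?thesis using a False unfolding t_def by auto
  qed
qed

lemma phase_same:
  assumes nd: "\<forall>j'\<le>j. fst (Sg j') \<noteq> Done" and cC: "cur (Sg j) \<in> C" "tgt (Sg j) = cur (Sg j)"
    and X: "X (j*W) = pos \<pi> (cur (Sg j)) (j*W)" and iW: "i \<le> W"
  shows "X (j*W+i) = pos \<pi> (cur (Sg j)) (j*W+i)"
  using phase[OF nd cC(1) _ X iW] cC by auto

lemma phase_meet:
  assumes nd: "\<forall>j'\<le>j. fst (Sg j') \<noteq> Done" and cC: "cur (Sg j) \<in> C" "tgt (Sg j) \<in> C"
    and X: "X (j*W) = pos \<pi> (cur (Sg j)) (j*W)"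
    and m: "\<exists>i<W. pos \<pi> (cur (Sg j)) (j*W+i) = pos \<pi> (tgt (Sg j)) (j*W+i)"
  shows "X (Suc j*W) = pos \<pi> (tgt (Sg j)) (Suc j*W)"
  using phase[OF nd cC X, of W] m by (auto simp: add.commute)

lemma pos_mod: "length (\<pi> c) dvd q \<Longrightarrow> t mod q = t' mod q \<Longrightarrow> pos \<pi> c t = pos \<pi> c t'"
  by (metis mod_mod_cancel pos_def)

lemma meetwin: assumes "c \<in> C" "d \<in> C" "pos \<pi> c t1 = pos \<pi> d t1"
  shows "\<exists>i<W. pos \<pi> c (t0+i) = pos \<pi> d (t0+i)"
proof -
  obtain q where q: "q > 0" "q \<le> W" "length (\<pi> c) dvd q" "length (\<pi> d) dvd q" using per assms by blast
  obtain t where t: "t0 \<le> t" "t < t0 + q" "t mod q = t1 mod q" using win[OF q(1)] by blast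
  have "pos \<pi> c t = pos \<pi> d t" using pos_mod[OF q(3) t(3)] pos_mod[OF q(4) t(3)] assms(3) by simp
  then show ?thesis using t q by (intro exI[of _ "t - t0"]) auto
qed

lemma coverwin: assumes "c \<in> C" "y \<in> set (\<pi> c)"
  shows "\<exists>i<W. pos \<pi> c (t0+i) = y"
proof -
  obtain r where r: "r < length (\<pi> c)" "\<pi> c ! r = y" using assms(2) by (auto simp: in_set_conv_nth)
  obtain q where q: "q > 0" "q \<le> W" "length (\<pi> c) dvd q" using per assms by blast
  have lW: "length (\<pi> c) \<le> W" using q dvd_imp_le by (meson le_trans)
  have lp: "length (\<pi> c) > 0" using r(1) by (metis gr_zeroI less_zeroE)
  obtain t where t: "t0 \<le> t" "t < t0 + length (\<pi> c)" "t mod length (\<pi> c) = r mod length (\<pi> c)"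
    using win[OF lp] by blast
  have "pos \<pi> c t = y" using t(3) r by (simp add: pos_def)
  then show ?thesis using t lW by (intro exI[of _ "t - t0"]) auto
qed

end


definition chain :: "(nat \<times> nat set) list \<Rightarrow> bool" where
  "chain stk \<longleftrightarrow> (\<forall>i. Suc i < length stk \<longrightarrow> fst (stk!i) \<in> snd (stk ! Suc i))"

context expl begin

definition base :: "nat \<Rightarrow> bool \<Rightarrow> (nat \<times> nat set) list \<Rightarrow> nat set \<Rightarrow> bool" where
  "base j b stk E \<longleftrightarrow> stk \<noteq> [] \<and> fst (last stk) = c0 \<and> finite E \<and> E \<subseteq> C \<and> fst ` set stk \<subseteq> C \<and>
     chain stk \<and>
     (\<forall>i<length stk. (0<i \<or> b) \<longrightarrow> fst (stk!i) \<in> E \<and> snd (stk!i) = M (fst (stk!i))) \<and>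
     (\<forall>c\<in>E. c \<notin> fst ` set stk \<longrightarrow> M c \<subseteq> E) \<and>
     X (j*W) = pos \<pi> (fst (hd stk)) (j*W) \<and>
     (\<forall>c\<in>E. set (\<pi> c) \<subseteq> X ` {..j*W})"

definition Inv :: "nat \<Rightarrow> st \<Rightarrow> bool" where
  "Inv j s \<longleftrightarrow> (case s of (mo, stk, E) \<Rightarrow> base j (mo \<noteq> Explore) stk E \<and>
     (case mo of
        Explore \<Rightarrow> fst (hd stk) \<notin> E \<and> j + length stk = 3 * card E + 1
      | Down d \<Rightarrow> d \<in> snd (hd stk) \<and> d \<notin> E \<and> d \<in> C \<and> j + length stk + 1 = 3 * card E
      | Up \<Rightarrow> 2 \<le> length stk \<and> snd (hd stk) \<subseteq> E \<and> j + length stk + 1 = 3 * card E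
      | Done \<Rightarrow> length stk = 1 \<and> snd (hd stk) \<subseteq> E \<and> j + length stk + 1 = 3 * card E))"

lemma M_sub: "M c \<subseteq> C" by (auto simp: M_def)

lemma decide_inv: assumes b: "base j True stk E" and a: "j + length stk + 1 = 3 * card E"
  shows "Inv j (decide stk E)"
proof -
  have ne: "stk \<noteq> []" using b by (simp add: base_def)
  have h0: "hd stk = stk ! 0" using ne by (simp add: hd_conv_nth)
  have N: "snd (hd stk) = M (fst (hd stk))" using b ne h0 by (simp add: base_def)
  show ?thesis
  proof (cases "snd (hd stk) - E \<noteq> {}")
    case True
    define d where "d = (LEAST d. d \<in> snd (hd stk) - E)"
    have d: "d \<in> snd (hd stk) - E" unfolding d_def using True by (metis LeastI_ex ex_in_conv)
    have dC: "d \<in> C" using d N M_sub by auto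
    have "decide stk E = (Down d, stk, E)" using True by (simp add: decide_def d_def)
    then show ?thesis using b a d dC by (simp add: Inv_def)
  next
    case False
    then have sub: "snd (hd stk) \<subseteq> E" by auto
    show ?thesis
    proof (cases "2 \<le> length stk")
      case True
      then have "decide stk E = (Up, stk, E)" using False by (simp add: decide_def)
      then show ?thesis using b a sub True by (simp add: Inv_def)
    next
      case False2: False
      then have "decide stk E = (Done, stk, E)" using False by (simp add: decide_def)
      moreover have "0 < length stk" using ne by simp
      then have "length stk = 1" using False2 by linarith
      ultimately show ?thesis using b a sub by (simp add: Inv_def)
    qed
  qed
qed

lemma Sg_Suc: "Sg (Suc j) = nxt W Ob j (Sg j)" by (simp add: Sg_def)

lemma c0: "c0 \<in> Ob 0" "c0 \<in> C" "pos \<pi> c0 0 = x0"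
proof -
  obtain c where "c \<in> C" "pos \<pi> c 0 = x0" using x0 by (auto simp: start_def)
  then have "c \<in> Ob 0" using in_O X0 by auto
  then show "c0 \<in> Ob 0" unfolding c0_def by (rule LeastI)
  then show "c0 \<in> C" "pos \<pi> c0 0 = x0" using in_O X0 by auto
qed

lemma Inv0: "Inv 0 (Sg 0)"
proof -
  have "Sg 0 = (Explore, [(c0, {})], {})" by (simp add: Sg_def c0_def)
  then show ?thesis using c0 X0 by (simp add: Inv_def base_def chain_def)
qed

lemma pre: assumes "Inv j s" "fst s \<noteq> Done"
  shows "cur s \<in> C \<and> tgt s \<in> C \<and> X (j*W) = pos \<pi> (cur s) (j*W)"
proof -
  obtain mo stk E where s: "s = (mo, stk, E)" by (cases s) auto
  have b: "base j (mo \<noteq> Explore) stk E" using assms s by (simp add: Inv_def)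
  then have ne: "stk \<noteq> []" and sC: "fst ` set stk \<subseteq> C" and Xj: "X (j*W) = pos \<pi> (fst (hd stk)) (j*W)"
    by (auto simp: base_def)
  have cC: "cur s \<in> C" using ne sC by (auto simp: s cur_def)
  have "tgt s \<in> C"
  proof (cases mo)
    case Explore then show ?thesis using cC by (simp add: s tgt_def)
  next
    case (Down d) then show ?thesis using assms s by (simp add: Inv_def tgt_def)
  next
    case Up
    then have "2 \<le> length stk" using assms s by (simp add: Inv_def)
    then have "hd (tl stk) \<in> set stk" by (cases stk; cases "tl stk") auto
    then show ?thesis using Up sC by (auto simp: s tgt_def)
  next
    case Done then show ?thesis using assms s by simp
  qed
  then show ?thesis using cC Xj by (simp add: s cur_def)
qed

lemma cover_mono: "j \<le> j' \<Longrightarrow> X ` {..j*W} \<subseteq> X ` {..j'*W}"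
  by (auto intro: order_trans mult_le_mono1)

lemma step_inv: assumes I: "Inv j (Sg j)" and nd: "\<forall>j'\<le>j. fst (Sg j') \<noteq> Done"
  shows "Inv (Suc j) (Sg (Suc j))"
proof -
  obtain mo stk E where s: "Sg j = (mo, stk, E)" by (cases "Sg j") auto
  have ndj: "mo \<noteq> Done" using nd s by auto
  have P: "cur (Sg j) \<in> C \<and> tgt (Sg j) \<in> C \<and> X (j*W) = pos \<pi> (cur (Sg j)) (j*W)"
    using pre[OF I] ndj s by simp
  have b: "base j (mo \<noteq> Explore) stk E" using I s by (simp add: Inv_def)
  have ne: "stk \<noteq> []" and lst: "fst (last stk) = c0" and fE: "finite E" and EC: "E \<subseteq> C"
    and sC: "fst ` set stk \<subseteq> C" and ch: "chain stk"
    and ent: "\<forall>i<length stk. (0<i \<or> mo \<noteq> Explore) \<longrightarrow> fst (stk!i) \<in> E \<and> snd (stk!i) = M (fst (stk!i))"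
    and cl: "\<forall>c\<in>E. c \<notin> fst ` set stk \<longrightarrow> M c \<subseteq> E"
    and cov: "\<forall>c\<in>E. set (\<pi> c) \<subseteq> X ` {..j*W}"
    using b by (auto simp: base_def)
  have cur: "cur (Sg j) = fst (hd stk)" by (simp add: s cur_def)
  have covS: "\<forall>c\<in>E. set (\<pi> c) \<subseteq> X ` {..Suc j*W}"
  proof -
    have m: "X ` {..j*W} \<subseteq> X ` {..Suc j*W}" by (rule cover_mono) simp
    show ?thesis using cov m by blast
  qed
  show ?thesis
  proof (cases mo)
    case Explore
    define c where "c = fst (hd stk)"
    define N where "N = (\<Union>i<W. Ob (j*W+i))"
    have tg: "tgt (Sg j) = cur (Sg j)" by (simp add: s Explore tgt_def)
    have cC: "c \<in> C" using P cur c_def by simp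
    have Xc: "\<And>i. i \<le> W \<Longrightarrow> X (j*W+i) = pos \<pi> c (j*W+i)"
      using phase_same[OF nd _ tg] P cur c_def by simp
    have NM: "N = M c"
    proof
      show "N \<subseteq> M c"
      proof
        fix d assume "d \<in> N"
        then obtain i where i: "i < W" "d \<in> Ob (j*W+i)" unfolding N_def by auto
        then have dd: "d \<in> C \<and> pos \<pi> d (j*W+i) = X (j*W+i)" using in_O by blast
        have "X (j*W+i) = pos \<pi> c (j*W+i)" using Xc[of i] i by simp
        then have "d \<in> C \<and> pos \<pi> c (j*W+i) = pos \<pi> d (j*W+i)" using dd by simp
        then show "d \<in> M c" unfolding M_def by blast
      qed
    next
      show "M c \<subseteq> N"
      proof
        fix d assume "d \<in> M c"
        then obtain t1 where d: "d \<in> C" "pos \<pi> c t1 = pos \<pi> d t1" unfolding M_def by auto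
        obtain i where i: "i < W" "pos \<pi> c (j*W+i) = pos \<pi> d (j*W+i)" using meetwin[OF cC d] by blast
        then have "d \<in> Ob (j*W+i)" using Xc[of i] d in_O by auto
        then show "d \<in> N" using i unfolding N_def by auto
      qed
    qed
    define stk' where "stk' = (c, N) # tl stk"
    define E' where "E' = insert c E"
    have mf: "map fst stk' = map fst stk" using ne unfolding stk'_def c_def by (cases stk) auto
    have len: "length stk' = length stk" using ne unfolding stk'_def by simp
    have nth': "\<And>i. 0 < i \<Longrightarrow> stk' ! i = stk ! i" using ne unfolding stk'_def
      by (cases stk) (auto simp: nth_Cons')
    have cE: "c \<notin> E" using I s Explore c_def by (simp add: Inv_def)
    have ar: "j + length stk = 3 * card E + 1" using I s Explore by (simp add: Inv_def)
    have cardE': "card E' = card E + 1" using cE fE unfolding E'_def by simp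
    have sst: "fst ` set stk' = fst ` set stk" by (metis mf set_map)
    have cin: "c \<in> fst ` set stk" using ne unfolding c_def by simp
    have "base (Suc j) True stk' E'"
      unfolding base_def
    proof (intro conjI)
      show "stk' \<noteq> []" unfolding stk'_def by simp
      show "fst (last stk') = c0" using lst ne mf
        by (metis last_map list.map_disc_iff)
      show "finite E'" using fE unfolding E'_def by simp
      show "E' \<subseteq> C" using EC cC unfolding E'_def by simp
      show "fst ` set stk' \<subseteq> C" using sst sC by simp
      show "chain stk'" unfolding chain_def
      proof (intro allI impI)
        fix i assume "Suc i < length stk'"
        moreover have "fst (stk' ! i) = fst (stk ! i)" using calculation mf len
          by (metis Suc_lessD nth_map)
        ultimately show "fst (stk' ! i) \<in> snd (stk' ! Suc i)" using ch nth'[of "Suc i"] len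
          unfolding chain_def by simp
      qed
      show "\<forall>i<length stk'. (0 < i \<or> True) \<longrightarrow> fst (stk' ! i) \<in> E' \<and> snd (stk' ! i) = M (fst (stk' ! i))"
      proof (intro allI impI)
        fix i assume i: "i < length stk'"
        show "fst (stk' ! i) \<in> E' \<and> snd (stk' ! i) = M (fst (stk' ! i))"
        proof (cases i)
          case 0 then show ?thesis using NM unfolding stk'_def E'_def by simp
        next
          case (Suc i')
          then show ?thesis using ent nth'[of i] i len unfolding E'_def by auto
        qed
      qed
      show "\<forall>c'\<in>E'. c' \<notin> fst ` set stk' \<longrightarrow> M c' \<subseteq> E'"
        using cl sst cin unfolding E'_def by auto
      show "X (Suc j * W) = pos \<pi> (fst (hd stk')) (Suc j * W)"
        using Xc[of W] unfolding stk'_def by (simp add: add.commute)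
      show "\<forall>c'\<in>E'. set (\<pi> c') \<subseteq> X ` {..Suc j * W}"
      proof
        fix c' assume "c' \<in> E'"
        show "set (\<pi> c') \<subseteq> X ` {..Suc j * W}"
        proof (cases "c' = c")
          case True
          show ?thesis
          proof
            fix y assume "y \<in> set (\<pi> c')"
            then obtain i where i: "i < W" "pos \<pi> c (j*W+i) = y" using coverwin[OF cC] True by blast
            then have "X (j*W+i) = y" using Xc[of i] by simp
            moreover have "j*W+i \<le> Suc j * W" using i by simp
            ultimately show "y \<in> X ` {..Suc j * W}" by force
          qed
        next
          case False
          then show ?thesis using covS \<open>c' \<in> E'\<close> unfolding E'_def by auto
        qed
      qed
    qed
    moreover have "Suc j + length stk' + 1 = 3 * card E'" using ar cardE' len by simp
    ultimately have "Inv (Suc j) (decide stk' E')" by (rule decide_inv)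
    moreover have "Sg (Suc j) = decide stk' E'"
      using Sg_Suc s Explore unfolding stk'_def E'_def c_def N_def by simp
    ultimately show ?thesis by simp
  next
    case (Down d)
    define c where "c = fst (hd stk)"
    have tg: "tgt (Sg j) = d" by (simp add: s Down tgt_def)
    have dI: "d \<in> snd (hd stk)" "d \<notin> E" "d \<in> C" and ar: "j + length stk + 1 = 3 * card E"
      using I s Down by (auto simp: Inv_def)
    have h0: "hd stk = stk ! 0" using ne by (simp add: hd_conv_nth)
    have "snd (hd stk) = M c" using ent ne h0 Down unfolding c_def by auto
    then obtain t1 where "pos \<pi> c t1 = pos \<pi> d t1" using dI unfolding M_def by auto
    moreover have cC: "c \<in> C" using P cur c_def by simp
    ultimately obtain i where "i < W" "pos \<pi> c (j*W+i) = pos \<pi> d (j*W+i)"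
      using meetwin[OF cC dI(3)] by blast
    then have Xd: "X (Suc j*W) = pos \<pi> d (Suc j*W)"
      using phase_meet[OF nd] P cur tg c_def by auto
    define stk' where "stk' = (d, {}) # stk"
    have "base (Suc j) False stk' E"
      unfolding base_def
    proof (intro conjI)
      show "stk' \<noteq> []" unfolding stk'_def by simp
      show "fst (last stk') = c0" using lst ne unfolding stk'_def by simp
      show "finite E" by (rule fE)
      show "E \<subseteq> C" by (rule EC)
      show "fst ` set stk' \<subseteq> C" using sC dI unfolding stk'_def by simp
      show "chain stk'" unfolding chain_def
      proof (intro allI impI)
        fix i assume i: "Suc i < length stk'"
        show "fst (stk' ! i) \<in> snd (stk' ! Suc i)"
        proof (cases i)
          case 0 then show ?thesis using dI h0 unfolding stk'_def by simp
        next
          case (Suc i') then show ?thesis using ch i unfolding chain_def stk'_def by simp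
        qed
      qed
      show "\<forall>i<length stk'. (0 < i \<or> False) \<longrightarrow> fst (stk' ! i) \<in> E \<and> snd (stk' ! i) = M (fst (stk' ! i))"
        using ent Down unfolding stk'_def by (auto simp: nth_Cons')
      show "\<forall>c'\<in>E. c' \<notin> fst ` set stk' \<longrightarrow> M c' \<subseteq> E" using cl unfolding stk'_def by auto
      show "X (Suc j * W) = pos \<pi> (fst (hd stk')) (Suc j * W)" using Xd unfolding stk'_def by simp
      show "\<forall>c'\<in>E. set (\<pi> c') \<subseteq> X ` {..Suc j * W}" by (rule covS)
    qed
    moreover have "Sg (Suc j) = (Explore, stk', E)" using Sg_Suc s Down unfolding stk'_def by simp
    ultimately show ?thesis using dI ar unfolding stk'_def by (simp add: Inv_def)
  next
    case Up
    have L2: "2 \<le> length stk" and sub: "snd (hd stk) \<subseteq> E" and ar: "j + length stk + 1 = 3 * card E"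
      using I s Up by (auto simp: Inv_def)
    obtain a b' rest where stk: "stk = a # b' # rest" using L2
      by (metis One_nat_def Suc_1 Suc_le_length_iff)
    have tg: "tgt (Sg j) = fst b'" by (simp add: s Up tgt_def stk)
    have e0: "fst a \<in> E" "snd a = M (fst a)" using ent Up stk by (auto dest: spec[of _ 0])
    have e1: "snd b' = M (fst b')" using ent Up stk by (auto dest: spec[of _ 1])
    have "fst a \<in> snd b'" using ch stk unfolding chain_def by (auto dest: spec[of _ 0])
    then obtain t1 where "pos \<pi> (fst b') t1 = pos \<pi> (fst a) t1" using e1 unfolding M_def by auto
    moreover have cC: "fst a \<in> C" "fst b' \<in> C" using sC stk by auto
    ultimately obtain i where "i < W" "pos \<pi> (fst a) (j*W+i) = pos \<pi> (fst b') (j*W+i)"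
      using meetwin[OF cC(2) cC(1)] by (metis)
    then have Xb: "X (Suc j*W) = pos \<pi> (fst b') (Suc j*W)"
      using phase_meet[OF nd] P cur tg stk by auto
    have "base (Suc j) True (b' # rest) E"
      unfolding base_def
    proof (intro conjI)
      show "b' # rest \<noteq> []" by simp
      show "fst (last (b' # rest)) = c0" using lst stk by simp
      show "finite E" by (rule fE)
      show "E \<subseteq> C" by (rule EC)
      show "fst ` set (b' # rest) \<subseteq> C" using sC stk by auto
      show "chain (b' # rest)" using ch stk unfolding chain_def
        by (metis Suc_less_eq length_Cons nth_Cons_Suc)
      show "\<forall>i<length (b' # rest). (0 < i \<or> True) \<longrightarrow> fst ((b' # rest) ! i) \<in> E \<and> snd ((b' # rest) ! i) = M (fst ((b' # rest) ! i))"
        using ent Up stk by (metis Suc_less_eq length_Cons nth_Cons_Suc zero_less_Suc)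
      show "\<forall>c'\<in>E. c' \<notin> fst ` set (b' # rest) \<longrightarrow> M c' \<subseteq> E"
        using cl stk sub e0 by auto
      show "X (Suc j * W) = pos \<pi> (fst (hd (b' # rest))) (Suc j * W)" using Xb by simp
      show "\<forall>c'\<in>E. set (\<pi> c') \<subseteq> X ` {..Suc j * W}" by (rule covS)
    qed
    moreover have "Suc j + length (b' # rest) + 1 = 3 * card E" using ar stk by simp
    ultimately have "Inv (Suc j) (decide (b' # rest) E)" by (rule decide_inv)
    moreover have "Sg (Suc j) = decide (b' # rest) E" using Sg_Suc s Up stk by simp
    ultimately show ?thesis by simp
  next
    case Done then show ?thesis using ndj by simp
  qed
qed

end


context expl begin

lemma inv_all: "(\<forall>j'<j. fst (Sg j') \<noteq> Done) \<Longrightarrow> Inv j (Sg j)"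
proof (induction j)
  case 0 then show ?case using Inv0 by simp
next
  case (Suc j)
  have "Inv j (Sg j)" using Suc by simp
  moreover have "\<forall>j'\<le>j. fst (Sg j') \<noteq> Done" using Suc.prems by (simp add: less_Suc_eq_le)
  ultimately show ?case by (rule step_inv)
qed

lemma inv_bound: assumes "Inv j s" shows "j \<le> 3 * card C"
proof -
  obtain mo stk E where s: "s = (mo, stk, E)" by (cases s) auto
  have b: "base j (mo \<noteq> Explore) stk E" using assms s by (simp add: Inv_def)
  then have ne: "stk \<noteq> []" and EC: "E \<subseteq> C" by (auto simp: base_def)
  have cE: "card E \<le> card C" by (rule card_mono[OF finC EC])
  have "0 < length stk" using ne by simp
  moreover have "j + length stk \<le> 3 * card E + 1" using assms s
    by (cases mo) (simp_all add: Inv_def)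
  ultimately show ?thesis using cE by linarith
qed

lemma ex_done: "\<exists>J. fst (Sg J) = Done"
proof (rule ccontr)
  assume "\<not> ?thesis"
  then have "Inv (Suc (3 * card C)) (Sg (Suc (3 * card C)))" using inv_all by auto
  then have "Suc (3 * card C) \<le> 3 * card C" by (rule inv_bound)
  then show False by simp
qed

definition J where "J = (LEAST j. fst (Sg j) = Done)"

lemma J: "fst (Sg J) = Done" "\<forall>j'<J. fst (Sg j') \<noteq> Done"
proof -
  show "fst (Sg J) = Done" unfolding J_def by (rule LeastI_ex[OF ex_done])
  show "\<forall>j'<J. fst (Sg j') \<noteq> Done" unfolding J_def using not_less_Least by blast
qed

lemma main: "\<exists>m\<le>(3 * card C - 2) * W. explores_in (algo W) S C \<pi> x0 m"
proof -
  obtain stk E where s: "Sg J = (Done, stk, E)" using J(1) by (cases "Sg J") auto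
  have I: "Inv J (Sg J)" using inv_all J(2) by simp
  have b: "base J True stk E" and L1: "length stk = 1" and sub: "snd (hd stk) \<subseteq> E"
    and ar: "J + length stk + 1 = 3 * card E"
    using I s by (auto simp: Inv_def)
  have ne: "stk \<noteq> []" and lst: "fst (last stk) = c0" and EC: "E \<subseteq> C"
    and ent: "\<forall>i<length stk. fst (stk!i) \<in> E \<and> snd (stk!i) = M (fst (stk!i))"
    and cl: "\<forall>c\<in>E. c \<notin> fst ` set stk \<longrightarrow> M c \<subseteq> E"
    and cov: "\<forall>c\<in>E. set (\<pi> c) \<subseteq> X ` {..J*W}"
    using b by (auto simp: base_def)
  obtain a where stka: "stk = [a]" using L1 by (cases stk) auto
  have a: "fst a = c0" "fst a \<in> E" "snd a = M (fst a)" using lst ent stka by auto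
  have closed: "\<forall>c\<in>E. M c \<subseteq> E"
  proof
    fix c assume "c \<in> E"
    show "M c \<subseteq> E"
    proof (cases "c = fst a")
      case True then show ?thesis using a sub stka by simp
    next
      case False then show ?thesis using cl \<open>c \<in> E\<close> stka by auto
    qed
  qed
  have c0E: "c0 \<in> E" using a by simp
  define m where "m = J * W"
  have cE: "card E \<le> card C" by (rule card_mono[OF finC EC])
  have "J \<le> 3 * card C - 2" using ar L1 cE by linarith
  then have mb: "m \<le> (3 * card C - 2) * W" unfolding m_def by (rule mult_le_mono1)
  have legal_all: "\<forall>t<m. \<exists>c. algo W (snd (run (algo W) C \<pi> x0 t)) = Ride c \<and>
                 c \<in> obs C \<pi> (fst (run (algo W) C \<pi> x0 t)) t"
  proof (intro allI impI)
    fix t assume t: "t < m"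
    define j where "j = t div W"
    define i where "i = t mod W"
    have tj: "t = j*W + i" unfolding j_def i_def by simp
    have iW: "i < W" unfolding i_def using W1 by simp
    have jJ: "j < J" using t unfolding j_def m_def by (simp add: less_mult_imp_div_less)
    have nd: "\<forall>j'\<le>j. fst (Sg j') \<noteq> Done" using J(2) jJ by auto
    have Ij: "Inv j (Sg j)" using inv_all J(2) jJ by auto
    have P: "cur (Sg j) \<in> C \<and> tgt (Sg j) \<in> C \<and> X (j*W) = pos \<pi> (cur (Sg j)) (j*W)"
      using pre[OF Ij] nd by simp
    show "\<exists>c. algo W (snd (run (algo W) C \<pi> x0 t)) = Ride c \<and>
                 c \<in> obs C \<pi> (fst (run (algo W) C \<pi> x0 t)) t"
      using legal[OF nd _ _ _ iW] P tj unfolding H_def X_def Ob_def by simp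
  qed
  have halt: "algo W (snd (run (algo W) C \<pi> x0 m)) = Halt"
  proof -
    have nh: "\<forall>t'<m. algo W (H t') \<noteq> Halt" using nohalt[OF J(2)] unfolding m_def by blast
    have "m div W = J" unfolding m_def using W1 by simp
    then show ?thesis using alg_H[OF nh] J(1) unfolding H_def by simp
  qed
  have covE: "\<forall>c\<in>E. set (\<pi> c) \<subseteq> X ` {..m}" using cov unfolding m_def by simp
  obtain w m' where w: "w 0 = x0" "realizable_walk C \<pi> w m'" "S \<subseteq> w ` {..m'}"
    using fea x0 unfolding feasible_def by blast
  have walkE: "\<forall>t<m'. \<exists>c\<in>E. pos \<pi> c t = w t \<and> pos \<pi> c (Suc t) = w (Suc t)"
  proof (intro allI impI)
    fix t assume "t < m'"
    then show "\<exists>c\<in>E. pos \<pi> c t = w t \<and> pos \<pi> c (Suc t) = w (Suc t)"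
    proof (induction t)
      case 0
      then obtain c where c: "c \<in> C" "pos \<pi> c 0 = w 0" "pos \<pi> c (Suc 0) = w (Suc 0)"
        using w(2) unfolding realizable_walk_def by blast
      have "pos \<pi> c0 0 = pos \<pi> c 0" using c c0 w(1) by simp
      then have "c \<in> M c0" using c(1) unfolding M_def by blast
      then show ?case using closed c0E c by blast
    next
      case (Suc t)
      then obtain c where c: "c \<in> E" "pos \<pi> c (Suc t) = w (Suc t)" by auto
      obtain c' where c': "c' \<in> C" "pos \<pi> c' (Suc t) = w (Suc t)" "pos \<pi> c' (Suc (Suc t)) = w (Suc (Suc t))"
        using w(2) Suc.prems unfolding realizable_walk_def by blast
      have "pos \<pi> c (Suc t) = pos \<pi> c' (Suc t)" using c c' by simp
      then have "c' \<in> M c" using c'(1) unfolding M_def by blast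
      then show ?case using closed c c' by blast
    qed
  qed
  have cover: "S \<subseteq> X ` {..m}"
  proof
    fix y assume "y \<in> S"
    then obtain t where t: "t \<le> m'" "y = w t" using w(3) by auto
    show "y \<in> X ` {..m}"
    proof (cases "t < m'")
      case True
      then obtain c where "c \<in> E" "pos \<pi> c t = y" using walkE t by auto
      moreover then have "c \<in> C" using EC by auto
      ultimately show ?thesis using covE pos_in by blast
    next
      case False
      then have tm: "t = m'" using t by simp
      show ?thesis
      proof (cases t)
        case 0
        then have "y = X 0" using t w(1) X0 by simp
        then show ?thesis by auto
      next
        case (Suc t')
        then obtain c where "c \<in> E" "pos \<pi> c (Suc t') = y" using walkE t tm by auto
        moreover then have "c \<in> C" using EC by auto
        ultimately show ?thesis using covE pos_in by blast
      qed
    qed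
  qed
  have "explores_in (algo W) S C \<pi> x0 m"
    unfolding explores_in_def using legal_all halt cover unfolding X_def by simp
  then show ?thesis using mb by blast
qed

end

lemma generic:
  assumes "1 \<le> W" "pv_system S C \<pi>" "feasible S C \<pi>"
    "\<forall>c\<in>C. \<forall>d\<in>C. \<exists>q>0. q \<le> W \<and> length (\<pi> c) dvd q \<and> length (\<pi> d) dvd q"
  shows "solves_within (algo W) S C \<pi> ((3 * card C - 2) * W)"
  unfolding solves_within_def
proof
  fix x0 assume "x0 \<in> start C \<pi>"
  then interpret expl W S C \<pi> x0 using assms by unfold_locales auto
  show "\<exists>m\<le>(3 * card C - 2) * W. explores_in (algo W) S C \<pi> x0 m" by (rule main)
qed

lemma len_le_period: assumes "pv_system S C \<pi>" "c \<in> C" shows "length (\<pi> c) \<le> period C \<pi>"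
  using assms unfolding period_def pv_system_def by (auto intro: Max_ge)

lemma len_pos: assumes "pv_system S C \<pi>" "c \<in> C" shows "0 < length (\<pi> c)"
  using assms unfolding pv_system_def by auto

theorem mainTheorem9:
  shows "(\<forall>B::nat. B \<ge> 1 \<longrightarrow> (\<exists>alg::algorithm. \<forall>S C \<pi>.
            pv_system S C \<pi> \<and> feasible S C \<pi> \<and> period C \<pi> \<le> B \<longrightarrow>
            solves_within alg S C \<pi> ((3 * card C - 2) * B ^ 2)))
       \<and> (\<forall>B::nat. B \<ge> 1 \<longrightarrow> (\<exists>alg::algorithm. \<forall>S C \<pi>.
            pv_system S C \<pi> \<and> homogeneous C \<pi> \<and> feasible S C \<pi> \<and> period C \<pi> \<le> B \<longrightarrow>
            solves_within alg S C \<pi> ((3 * card C - 2) * B)))"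
proof (intro conjI allI impI)
  fix B :: nat assume B: "B \<ge> 1"
  show "\<exists>alg::algorithm. \<forall>S C \<pi>. pv_system S C \<pi> \<and> feasible S C \<pi> \<and> period C \<pi> \<le> B \<longrightarrow>
            solves_within alg S C \<pi> ((3 * card C - 2) * B ^ 2)"
  proof (intro exI allI impI)
    fix S C \<pi> assume h: "pv_system S C \<pi> \<and> feasible S C \<pi> \<and> period C \<pi> \<le> B"
    have per: "\<forall>c\<in>C. \<forall>d\<in>C. \<exists>q>0. q \<le> B^2 \<and> length (\<pi> c) dvd q \<and> length (\<pi> d) dvd q"
    proof (intro ballI)
      fix c d assume cd: "c \<in> C" "d \<in> C"
      have pvs: "pv_system S C \<pi>" using h by simp
      have pB: "period C \<pi> \<le> B" using h by simp
      have lc: "length (\<pi> c) \<le> B" "0 < length (\<pi> c)"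
        using le_trans[OF len_le_period[OF pvs cd(1)] pB] len_pos[OF pvs cd(1)] by simp_all
      have pB: "period C \<pi> \<le> B" using h by simp
      have ld: "length (\<pi> d) \<le> B" "0 < length (\<pi> d)"
        using le_trans[OF len_le_period[OF pvs cd(2)] pB] len_pos[OF pvs cd(2)] by simp_all
      have "length (\<pi> c) * length (\<pi> d) \<le> B * B" using lc ld by (intro mult_le_mono) auto
      then have "length (\<pi> c) * length (\<pi> d) \<le> B^2" by (simp add: power2_eq_square)
      moreover have "0 < length (\<pi> c) * length (\<pi> d)" using lc ld by simp
      ultimately show "\<exists>q>0. q \<le> B^2 \<and> length (\<pi> c) dvd q \<and> length (\<pi> d) dvd q"
        by (intro exI[of _ "length (\<pi> c) * length (\<pi> d)"]) simp
    qed
    have "1 \<le> B^2" using B by simp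
    then show "solves_within (algo (B^2)) S C \<pi> ((3 * card C - 2) * B ^ 2)"
      using h by (intro generic[OF \<open>1 \<le> B^2\<close> _ _ per]) simp_all
  qed
next
  fix B :: nat assume B: "B \<ge> 1"
  show "\<exists>alg::algorithm. \<forall>S C \<pi>. pv_system S C \<pi> \<and> homogeneous C \<pi> \<and> feasible S C \<pi> \<and> period C \<pi> \<le> B \<longrightarrow>
            solves_within alg S C \<pi> ((3 * card C - 2) * B)"
  proof (intro exI allI impI)
    fix S C \<pi> assume h: "pv_system S C \<pi> \<and> homogeneous C \<pi> \<and> feasible S C \<pi> \<and> period C \<pi> \<le> B"
    have per: "\<forall>c\<in>C. \<forall>d\<in>C. \<exists>q>0. q \<le> B \<and> length (\<pi> c) dvd q \<and> length (\<pi> d) dvd q"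
    proof (intro ballI)
      fix c d assume cd: "c \<in> C" "d \<in> C"
      have pvs: "pv_system S C \<pi>" using h by simp
      have pB: "period C \<pi> \<le> B" using h by simp
      have lc: "length (\<pi> c) \<le> B" "0 < length (\<pi> c)"
        using le_trans[OF len_le_period[OF pvs cd(1)] pB] len_pos[OF pvs cd(1)] by simp_all
      have hom: "homogeneous C \<pi>" using h by simp
      have "length (\<pi> d) = length (\<pi> c)" using hom cd unfolding homogeneous_def by blast
      then show "\<exists>q>0. q \<le> B \<and> length (\<pi> c) dvd q \<and> length (\<pi> d) dvd q" using lc
        by (intro exI[of _ "length (\<pi> c)"]) simp
    qed
    show "solves_within (algo B) S C \<pi> ((3 * card C - 2) * B)"
      using h by (intro generic[OF B _ _ per]) simp_all
  qed
qed


end
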